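(* Let $u,w$ be words over $\{L,R\}$ such that $w$ starts with $R$ and $Ru$ is a tail of $w$. Then $LRu$ is reduced from $Lw$.
   Context: Words are finite strings (including the empty word) over $\{L,R\}$. A tail of $w$ is any word $v'$ with $w=vv'$ for some word $v$. A word $u$ is reduced from $w$ if it is obtained from $w$ by finitely many (possibly zero) successive applications of the reduction rules, where $v,v'$ are arbitrary words: (1) $vRRv'\Rightarrow vRv'$; (1') $vLLv'\Rightarrow vLv'$; (2) $vLRv'\Rightarrow vv'$; (2') $vRLv'\Rightarrow vv'$. *)

theory Defs
  imports Main
begin

datatype letter = L | R

type_synonym word = "letter list"

definition is_tail :: "word \<Rightarrow> word \<Rightarrow> bool" where
  "is_tail t w \<longleftrightarrow> (\<exists>v. w = v @ t)"

inductive red_step :: "word \<Rightarrow> word \<Rightarrow> bool" where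
  rule1:  "red_step (v @ [R, R] @ v') (v @ [R] @ v')"
| rule1': "red_step (v @ [L, L] @ v') (v @ [L] @ v')"
| rule2:  "red_step (v @ [L, R] @ v') (v @ v')"
| rule2': "red_step (v @ [R, L] @ v') (v @ v')"

definition reduced_from :: "word \<Rightarrow> word \<Rightarrow> bool" where
  "reduced_from u w \<longleftrightarrow> red_step\<^sup>*\<^sup>* w u"

end

theory Submission
  imports Defs
begin

lemma step_ctx: "red_step x y \<Longrightarrow> red_step (p @ x @ q) (p @ y @ q)"
proof (induction rule: red_step.induct)
  case (rule1 v v') show ?case using red_step.rule1[of "p @ v" "v' @ q"] by simp
next
  case (rule1' v v') show ?case using red_step.rule1'[of "p @ v" "v' @ q"] by simp
next
  case (rule2 v v') show ?case using red_step.rule2[of "p @ v" "v' @ q"] by simp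
next
  case (rule2' v v') show ?case using red_step.rule2'[of "p @ v" "v' @ q"] by simp
qed

lemma steps_ctx: "red_step\<^sup>*\<^sup>* x y \<Longrightarrow> red_step\<^sup>*\<^sup>* (p @ x @ q) (p @ y @ q)"
proof (induction rule: rtranclp_induct)
  case base then show ?case by simp
next
  case (step y z) then show ?case
    by (meson rtranclp.rtrancl_into_rtrancl step_ctx)
qed

lemma one: "red_step a b \<Longrightarrow> red_step\<^sup>*\<^sup>* a b" by simp

lemma short2: "length n \<le> 1 \<Longrightarrow> \<exists>m. length m \<le> 1 \<and> red_step\<^sup>*\<^sup>* (a # n) m"
proof (cases n)
  case Nil then show ?thesis by (intro exI[of _ "[a]"]) auto
next
  case (Cons b t)
  assume "length n \<le> 1"
  with Cons have t: "t = []" by simp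
  show ?thesis
  proof (cases a; cases b)
    assume "a = L" "b = L"
    then show ?thesis using Cons t red_step.rule1'[of "[]" "[]"]
      by (intro exI[of _ "[L]"]) auto
  next
    assume "a = L" "b = R"
    then show ?thesis using Cons t red_step.rule2[of "[]" "[]"]
      by (intro exI[of _ "[]"]) auto
  next
    assume "a = R" "b = L"
    then show ?thesis using Cons t red_step.rule2'[of "[]" "[]"]
      by (intro exI[of _ "[]"]) auto
  next
    assume "a = R" "b = R"
    then show ?thesis using Cons t red_step.rule1[of "[]" "[]"]
      by (intro exI[of _ "[R]"]) auto
  qed
qed

lemma normal: "\<exists>n. length n \<le> 1 \<and> red_step\<^sup>*\<^sup>* x n"
proof (induction x)
  case Nil then show ?case by (intro exI[of _ "[]"]) auto
next
  case (Cons a x)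
  then obtain n where n: "length n \<le> 1" "red_step\<^sup>*\<^sup>* x n" by blast
  have "red_step\<^sup>*\<^sup>* ([a] @ x @ []) ([a] @ n @ [])" by (rule steps_ctx[OF n(2)])
  then have 1: "red_step\<^sup>*\<^sup>* (a # x) (a # n)" by simp
  obtain m where "length m \<le> 1" "red_step\<^sup>*\<^sup>* (a # n) m" using short2[OF n(1)] by blast
  then show ?case using 1 by (meson rtranclp_trans)
qed

lemma RxR: "red_step\<^sup>*\<^sup>* (L # R # x @ R # u) (L # R # u)"
proof -
  obtain n where n: "length n \<le> 1" "red_step\<^sup>*\<^sup>* x n" using normal by blast
  have "red_step\<^sup>*\<^sup>* ([L, R] @ x @ R # u) ([L, R] @ n @ R # u)" by (rule steps_ctx[OF n(2)])
  then have 1: "red_step\<^sup>*\<^sup>* (L # R # x @ R # u) (L # R # n @ R # u)" by simp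
  have 2: "red_step\<^sup>*\<^sup>* (L # R # n @ R # u) (L # R # u)"
  proof (cases n)
    case Nil
    then show ?thesis using red_step.rule1[of "[L]" u] by auto
  next
    case (Cons b t)
    with n(1) have t: "t = []" by simp
    show ?thesis
    proof (cases b)
      case L
      then show ?thesis using Cons t red_step.rule2'[of "[L]" "R # u"] by auto
    next
      case R
      have "red_step (L # R # R # R # u) (L # R # R # u)" using red_step.rule1[of "[L]" "R # u"] by simp
      moreover have "red_step (L # R # R # u) (L # R # u)" using red_step.rule1[of "[L]" "u"] by simp
      ultimately show ?thesis using Cons t R by auto
    qed
  qed
  show ?thesis using 1 2 by (meson rtranclp_trans)
qed

theorem mainTheorem7:
  fixes u w :: word
  assumes "w \<noteq> [] \<and> hd w = R"
    and "is_tail (R # u) w"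
  shows "reduced_from (L # R # u) (L # w)"
proof -
  obtain v where v: "w = v @ R # u" using assms(2) unfolding is_tail_def by blast
  show ?thesis
  proof (cases v)
    case Nil then show ?thesis using v unfolding reduced_from_def by simp
  next
    case (Cons a x)
    with v assms(1) have "a = R" by simp
    then show ?thesis using v Cons RxR unfolding reduced_from_def by simp
  qed
qed

end
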